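(* Let $b$ be a solution of length $L > 11$. Then $b$ is extendable and $b$ is not particular; that is, $b(b(0)) = 1$, $b(i) = 0$ for all $i$ with $b(0) < i < L$, and $b(b(0) - 1) = 0$.
   Context: A solution of length $L \ge 1$ is a sequence $(b(0), \dots, b(L-1))$ of integers with $0 \le b(i) < L$ such that for every $0 \le i < L$, $b(i) = |\{ j : 0 \le j < L,\ b(j) = i\}|$. A solution $b$ of length $L$ is extendable if $b(b(0)) = 1$ and $b(i) = 0$ for all $i$ with $b(0) < i < L$. It is particular if it is extendable and $b(b(0) - 1) > 0$. *)

theory Defs
  imports Main
begin

text \<open>A sequence (b 0, ..., b (L-1)) is represented by a function b :: nat => nat;
only its values on {0..<L} are relevant.\<close>

definition solution :: "nat \<Rightarrow> (nat \<Rightarrow> nat) \<Rightarrow> bool" where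
  "solution L b \<longleftrightarrow> L \<ge> 1 \<and> (\<forall>i<L. b i < L) \<and>
     (\<forall>i<L. b i = card {j. j < L \<and> b j = i})"

definition extendable :: "nat \<Rightarrow> (nat \<Rightarrow> nat) \<Rightarrow> bool" where
  "extendable L b \<longleftrightarrow> solution L b \<and> b (b 0) = 1 \<and> (\<forall>i. b 0 < i \<and> i < L \<longrightarrow> b i = 0)"

definition particular :: "nat \<Rightarrow> (nat \<Rightarrow> nat) \<Rightarrow> bool" where
  "particular L b \<longleftrightarrow> extendable L b \<and> b (b 0 - 1) > 0"

end

theory Submission
  imports Defs
begin

theorem mainTheorem7:
  fixes L :: nat and b :: "nat \<Rightarrow> nat"
  assumes "solution L b" and "L > 11"
  shows "extendable L b \<and> \<not> particular L b"
proof -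
  define C where "C i = {j. j < L \<and> b j = i}" for i
  have bl: "\<And>i. i < L \<Longrightarrow> b i < L" and bc: "\<And>i. i < L \<Longrightarrow> b i = card (C i)"
  proof -
    fix i assume "i < L"
    thus "b i < L" using assms(1) unfolding solution_def by blast
  next
    fix i assume "i < L"
    thus "b i = card (C i)" using assms(1) unfolding solution_def C_def by blast
  qed
  have finC: "\<And>i. finite (C i)" unfolding C_def by auto
  define z where "z = b 0"
  have z1: "z \<ge> 1"
  proof (rule ccontr)
    assume "\<not> z \<ge> 1"
    hence "b 0 = 0" using z_def by simp
    hence "0 \<in> C 0" using assms(2) unfolding C_def by auto
    hence "card (C 0) > 0" using finC card_gt_0_iff by blast
    thus False using bc[of 0] assms(2) \<open>b 0 = 0\<close> by simp
  qed
  have sumL: "(\<Sum>i<L. b i) = L"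
  proof -
    have "(\<Sum>i<L. b i) = (\<Sum>i<L. card (C i))" by (rule sum.cong) (auto intro: bc)
    also have "\<dots> = card (\<Union>i<L. C i)"
      by (rule card_UN_disjoint[symmetric]) (auto simp: finC C_def)
    also have "(\<Union>i<L. C i) = {..<L}" using bl unfolding C_def by auto
    finally show ?thesis by simp
  qed
  define N where "N = {i. i < L \<and> b i \<noteq> 0}"
  define S where "S = {i. 1 \<le> i \<and> i < L \<and> b i \<noteq> 0}"
  have NS: "N = insert 0 S" "0 \<notin> S" using z1 assms(2) unfolding N_def S_def z_def by auto
  have finS: "finite S" "finite N" unfolding S_def N_def by auto
  have cardN: "card N = L - z"
  proof -
    have "{..<L} = C 0 \<union> N" "C 0 \<inter> N = {}" unfolding C_def N_def by auto
    hence "L = card (C 0) + card N" using finC finS card_Un_disjoint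
      by (metis card_lessThan)
    moreover have "card (C 0) = z" using bc[of 0] assms(2) z_def by simp
    ultimately show ?thesis by simp
  qed
  have cardS: "card S = L - z - 1" using cardN NS finS by simp
  have "(\<Sum>i<L. b i) = (\<Sum>i\<in>N. b i)"
    by (rule sum.mono_neutral_right) (auto simp: N_def)
  hence sumN: "(\<Sum>i\<in>N. b i) = L" using sumL by simp
  have sumS: "(\<Sum>i\<in>S. b i) = L - z" using sumN NS finS z_def by simp
  have le2: "\<And>k. 1 \<le> k \<Longrightarrow> k < L \<Longrightarrow> b k \<le> 2"
  proof (rule ccontr)
    fix k assume k: "1 \<le> k" "k < L" "\<not> b k \<le> 2"
    hence kS: "k \<in> S" unfolding S_def by auto
    have "(\<Sum>i\<in>S. b i) = b k + (\<Sum>i\<in>S - {k}. b i)" by (rule sum.remove[OF finS(1) kS])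
    moreover have "(\<Sum>i\<in>S - {k}. b i) \<ge> (\<Sum>i\<in>S - {k}. 1)"
      by (rule sum_mono) (auto simp: S_def)
    moreover have "(\<Sum>i\<in>S - {k}. (1::nat)) = card S - 1" using kS finS by simp
    moreover have "card S \<noteq> 0" using kS finS(1) by auto
    hence "card S \<ge> 1" by simp
    ultimately show False using sumS cardS k(3) by linarith
  qed
  have Nsub: "N \<subseteq> {0,1,2,z}"
  proof
    fix i assume "i \<in> N"
    hence i: "i < L" "b i \<noteq> 0" unfolding N_def by auto
    hence "C i \<noteq> {}" using bc[OF i(1)] by auto
    then obtain j where "j < L" "b j = i" unfolding C_def by auto
    thus "i \<in> {0,1,2,z}" using le2[of j] z_def by (cases "j = 0") auto
  qed
  have "card {0,1,2,z::nat} \<le> 4" by (simp add: card_insert_if)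
  hence "card N \<le> 4" using card_mono[OF _ Nsub] by simp
  hence zbig: "z \<ge> 8" using cardN assms(2) by linarith
  have zero: "\<And>i. i < L \<Longrightarrow> i \<ge> 3 \<Longrightarrow> i \<noteq> z \<Longrightarrow> b i = 0"
  proof -
    fix i assume i: "i < L" "i \<ge> 3" "i \<noteq> z"
    have "C i = {}"
    proof (rule ccontr)
      assume "C i \<noteq> {}"
      then obtain j where j: "j < L" "b j = i" unfolding C_def by auto
      show False
      proof (cases "j = 0")
        case True thus False using j i z_def by simp
      next
        case False thus False using j i le2[of j] by simp
      qed
    qed
    thus "b i = 0" using bc[OF i(1)] by simp
  qed
  have zL: "z < L" using bl assms(2) z_def by simp
  have bz: "b z = 1"
  proof -
    have "C z = {0}"
    proof
      show "{0} \<subseteq> C z" using assms(2) z_def unfolding C_def by simp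
      show "C z \<subseteq> {0}"
      proof
        fix j assume "j \<in> C z"
        hence j: "j < L" "b j = z" unfolding C_def by auto
        show "j \<in> {0}"
        proof (rule ccontr)
          assume "j \<notin> {0}"
          thus False using le2[of j] j zbig by simp
        qed
      qed
    qed
    thus ?thesis using bc[OF zL] by simp
  qed
  have ext: "extendable L b"
    unfolding extendable_def using assms(1) bz zero zbig z_def by auto
  have "b (b 0 - 1) = 0" using zero[of "z - 1"] zbig z_def zL by simp
  thus ?thesis using ext unfolding particular_def by simp
qed

end
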